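(* Let $\alpha>0$, $1<p<\infty$, $\frac1p+\frac1{p'}=1$, and let $\mathcal{G}_\alpha=\left\{z\mapsto\exp\left(\alpha az+\frac{\alpha}{2}cz^2\right)\colon a,c\in\mathbb C,\ |c|<1\right\}$ (functions on $\mathbb C$). Then \[ \sup_{g,h\in\mathcal{G}_\alpha}\mathcal{R}_{p,\alpha}(g,h)=\sqrt{C_p},\qquad \mathcal{R}_{p,\alpha}(g,h)=\frac{|\langle g,h\rangle_\alpha|}{\|g\|_{p,\alpha}\|h\|_{p',\alpha}}. \]
   Context: For $\alpha>0$, $\gamma^1_\alpha(dz)=(\alpha/\pi)e^{-\alpha|z|^2}\lambda(dz)$ on $\mathbb C$, with $\lambda$ Lebesgue measure. For $1\le q<\infty$, $\|f\|_{q,\alpha}:=\left(\int_{\mathbb C}|f|^q\,d\gamma^1_{\alpha q/2}\right)^{1/q}$. $\langle f,g\rangle_\alpha=\int_{\mathbb C} f\overline g\,d\gamma^1_\alpha$. $C_p=2\,p^{-1/p}\,(p')^{-1/p'}$. *)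

theory Defs
  imports "HOL-Analysis.Analysis"
begin

definition gauss_dens :: "real \<Rightarrow> complex \<Rightarrow> real" where
  "gauss_dens \<alpha> z = (\<alpha> / pi) * exp (- \<alpha> * (cmod z)\<^sup>2)"

definition gnorm :: "real \<Rightarrow> real \<Rightarrow> (complex \<Rightarrow> complex) \<Rightarrow> real" where
  "gnorm q \<alpha> f = (\<integral> z. (cmod (f z)) powr q * gauss_dens (\<alpha> * q / 2) z \<partial>lborel) powr (1 / q)"

definition ginner :: "real \<Rightarrow> (complex \<Rightarrow> complex) \<Rightarrow> (complex \<Rightarrow> complex) \<Rightarrow> complex" where
  "ginner \<alpha> f g = (\<integral> z. complex_of_real (gauss_dens \<alpha> z) * (f z * cnj (g z)) \<partial>lborel)"

definition conj_exp :: "real \<Rightarrow> real" where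
  "conj_exp p = p / (p - 1)"

definition Cp :: "real \<Rightarrow> real" where
  "Cp p = 2 * p powr (- 1 / p) * (conj_exp p) powr (- 1 / conj_exp p)"

definition gaussians :: "real \<Rightarrow> (complex \<Rightarrow> complex) set" where
  "gaussians \<alpha> = {(\<lambda>z. exp (complex_of_real \<alpha> * a * z + complex_of_real (\<alpha> / 2) * c * z\<^sup>2)) | a c. cmod c < 1}"

definition Rratio :: "real \<Rightarrow> real \<Rightarrow> (complex \<Rightarrow> complex) \<Rightarrow> (complex \<Rightarrow> complex) \<Rightarrow> real" where
  "Rratio p \<alpha> g h = cmod (ginner \<alpha> g h) / (gnorm p \<alpha> g * gnorm (conj_exp p) \<alpha> h)"

end

theory Submission
  imports Defs "HOL-Probability.Characteristic_Functions"
begin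

lemma lborel_complex:
  "distr (lborel \<Otimes>\<^sub>M lborel) borel (\<lambda>x. Complex (fst x) (snd x)) = (lborel :: complex measure)"
proof (rule lborel_eqI[symmetric])
  fix l u :: complex
  assume lu: "\<And>b. b \<in> Basis \<Longrightarrow> l \<bullet> b \<le> u \<bullet> b"
  have le: "Re l \<le> Re u" "Im l \<le> Im u" using lu[of 1] lu[of \<i>] by (auto simp: Basis_complex_def)
  have "(\<lambda>x. Complex (fst x) (snd x)) -` box l u \<inter> space (lborel \<Otimes>\<^sub>M lborel)
        = box (Re l) (Re u) \<times> box (Im l) (Im u)"
    by (auto simp: box_def Basis_complex_def space_pair_measure)
  moreover have "(\<lambda>x. Complex (fst x) (snd x)) \<in> lborel \<Otimes>\<^sub>M lborel \<rightarrow>\<^sub>M borel"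
    unfolding Complex_eq by measurable
  ultimately have "emeasure (distr (lborel \<Otimes>\<^sub>M lborel) borel (\<lambda>x. Complex (fst x) (snd x))) (box l u)
      = emeasure (lborel \<Otimes>\<^sub>M lborel) (box (Re l) (Re u) \<times> box (Im l) (Im u))"
    by (simp add: emeasure_distr)
  also have "\<dots> = ennreal ((Re u - Re l) * (Im u - Im l))"
    using le by (simp add: lborel.emeasure_pair_measure_Times ennreal_mult)
  also have "\<dots> = (\<Prod>b\<in>Basis. (u - l) \<bullet> b)"
    by (simp add: Basis_complex_def)
  finally show "emeasure (distr (lborel \<Otimes>\<^sub>M lborel) borel (\<lambda>x. Complex (fst x) (snd x))) (box l u) = (\<Prod>b\<in>Basis. (u - l) \<bullet> b)" .
qed simp

lemma exp_eqI: "u + v = w \<Longrightarrow> exp u * exp v = exp (w::real)"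
  by (simp add: mult_exp_exp)

lemma gauss1_hbi:
  fixes a b :: real assumes a: "a > 0"
  shows "has_bochner_integral lborel (\<lambda>x. exp (-a*x\<^sup>2 + b*x)) (sqrt (pi/a) * exp (b\<^sup>2/(4*a)))"
proof -
  define \<mu> where "\<mu> = b/(2*a)"
  define \<sigma> where "\<sigma> = 1 / sqrt (2*a)"
  have s2: "\<sigma>\<^sup>2 = 1/(2*a)" using a by (simp add: \<sigma>_def power_divide)
  have eq: "exp (-a*x\<^sup>2 + b*x) = (sqrt (pi/a) * exp (b\<^sup>2/(4*a))) * normal_density \<mu> \<sigma> x" for x
  proof -
    have nd: "normal_density \<mu> \<sigma> x = 1 / sqrt (pi / a) * exp (-a*(x-\<mu>)\<^sup>2)"
      unfolding normal_density_def s2 using a by (simp add: field_simps)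
    have h1: "(sqrt (pi/a) * exp (b\<^sup>2/(4*a))) * normal_density \<mu> \<sigma> x = exp (b\<^sup>2/(4*a)) * exp (-a*(x-\<mu>)\<^sup>2)"
      unfolding nd using a by simp
    have h2: "exp (b\<^sup>2/(4*a)) * exp (-a*(x-\<mu>)\<^sup>2) = exp (-a*x\<^sup>2 + b*x)"
      by (rule exp_eqI) (use a in \<open>simp add: \<mu>_def field_simps power2_eq_square\<close>)
    show ?thesis by (rule trans[OF h2[symmetric] h1[symmetric]])
  qed
  have "has_bochner_integral lborel (\<lambda>x. (sqrt (pi/a) * exp (b\<^sup>2/(4*a))) * normal_density \<mu> \<sigma> x) ((sqrt (pi/a) * exp (b\<^sup>2/(4*a))) * 1)"
    by (intro has_bochner_integral_mult_right) (unfold has_bochner_integral_iff, intro conjI integrable_normal_density integral_normal_density, auto simp add: \<sigma>_def a)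
  then show ?thesis unfolding eq by simp
qed

lemma gauss1_nn:
  fixes a b :: real assumes a: "a > 0"
  shows "(\<integral>\<^sup>+x. ennreal (exp (-a*x\<^sup>2 + b*x)) \<partial>lborel) = ennreal (sqrt (pi/a) * exp (b\<^sup>2/(4*a)))"
proof -
  have h: "has_bochner_integral lborel (\<lambda>x. exp (-a*x\<^sup>2 + b*x)) (sqrt (pi/a) * exp (b\<^sup>2/(4*a)))"
    by (rule gauss1_hbi[OF a])
  from h have "integrable lborel (\<lambda>x. exp (-a*x\<^sup>2 + b*x))" "integral\<^sup>L lborel (\<lambda>x. exp (-a*x\<^sup>2 + b*x)) = sqrt (pi/a) * exp (b\<^sup>2/(4*a))"
    by (auto simp: has_bochner_integral_iff)
  then show ?thesis
    using nn_integral_eq_integral[of lborel "\<lambda>x. exp (-a*x\<^sup>2 + b*x)"] by simp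
qed

lemma gauss2_nn:
  fixes A B C D E :: real
  assumes A: "A > 0" and B: "B > 0" and det: "A*B - C\<^sup>2 > 0"
  shows "(\<integral>\<^sup>+x. \<integral>\<^sup>+y. ennreal (exp (-(A*x\<^sup>2 + 2*C*x*y + B*y\<^sup>2) + D*x + E*y)) \<partial>lborel \<partial>lborel)
     = ennreal (pi / sqrt (A*B - C\<^sup>2) * exp ((B*D\<^sup>2 - 2*C*D*E + A*E\<^sup>2)/(4*(A*B - C\<^sup>2))))"
proof -
  have inner: "(\<integral>\<^sup>+y. ennreal (exp (-(A*x\<^sup>2 + 2*C*x*y + B*y\<^sup>2) + D*x + E*y)) \<partial>lborel)
     = ennreal (sqrt (pi/B) * exp (E\<^sup>2/(4*B)) * exp (-((A*B - C\<^sup>2)/B)*x\<^sup>2 + ((D*B - C*E)/B)*x))" for x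
  proof -
    have "(\<integral>\<^sup>+y. ennreal (exp (-(A*x\<^sup>2 + 2*C*x*y + B*y\<^sup>2) + D*x + E*y)) \<partial>lborel)
        = (\<integral>\<^sup>+y. ennreal (exp (-A*x\<^sup>2 + D*x)) * ennreal (exp (-B*y\<^sup>2 + (E - 2*C*x)*y)) \<partial>lborel)"
      by (intro nn_integral_cong) (simp add: ennreal_mult'[symmetric] mult_exp_exp algebra_simps power2_eq_square)
    also have "\<dots> = ennreal (exp (-A*x\<^sup>2 + D*x)) * (\<integral>\<^sup>+y. ennreal (exp (-B*y\<^sup>2 + (E - 2*C*x)*y)) \<partial>lborel)"
      by (simp add: nn_integral_cmult)
    also have "\<dots> = ennreal (exp (-A*x\<^sup>2 + D*x) * (sqrt (pi/B) * exp ((E - 2*C*x)\<^sup>2/(4*B))))"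
      by (subst gauss1_nn[OF B]) (simp add: ennreal_mult'[symmetric])
    also have "exp (-A*x\<^sup>2 + D*x) * (sqrt (pi/B) * exp ((E - 2*C*x)\<^sup>2/(4*B)))
        = sqrt (pi/B) * exp (E\<^sup>2/(4*B)) * exp (-((A*B - C\<^sup>2)/B)*x\<^sup>2 + ((D*B - C*E)/B)*x)"
    proof -
      have "-A*x\<^sup>2 + D*x + (E - 2*C*x)\<^sup>2/(4*B) = E\<^sup>2/(4*B) + (-((A*B - C\<^sup>2)/B)*x\<^sup>2 + ((D*B - C*E)/B)*x)"
        using B by (simp add: field_simps power2_eq_square)
      then show ?thesis by (simp add: mult_exp_exp mult_ac)
    qed
    finally show ?thesis .
  qed
  have a': "(A*B - C\<^sup>2)/B > 0" using det B by simp
  have "(\<integral>\<^sup>+x. \<integral>\<^sup>+y. ennreal (exp (-(A*x\<^sup>2 + 2*C*x*y + B*y\<^sup>2) + D*x + E*y)) \<partial>lborel \<partial>lborel)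
      = (\<integral>\<^sup>+x. ennreal (sqrt (pi/B) * exp (E\<^sup>2/(4*B))) * ennreal (exp (-((A*B - C\<^sup>2)/B)*x\<^sup>2 + ((D*B - C*E)/B)*x)) \<partial>lborel)"
    by (intro nn_integral_cong) (subst inner, rule ennreal_mult', use B in simp)
  also have "\<dots> = ennreal (sqrt (pi/B) * exp (E\<^sup>2/(4*B))) * ennreal (sqrt (pi/((A*B - C\<^sup>2)/B)) * exp (((D*B - C*E)/B)\<^sup>2/(4*((A*B - C\<^sup>2)/B))))"
    by (subst nn_integral_cmult, simp, subst gauss1_nn[OF a'], rule refl)
  also have "\<dots> = ennreal (pi / sqrt (A*B - C\<^sup>2) * exp ((B*D\<^sup>2 - 2*C*D*E + A*E\<^sup>2)/(4*(A*B - C\<^sup>2))))"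
  proof -
    have "sqrt (pi/B) * sqrt (pi/((A*B - C\<^sup>2)/B)) = sqrt (pi/B * (pi/((A*B - C\<^sup>2)/B)))"
      by (rule real_sqrt_mult[symmetric])
    also have "pi/B * (pi/((A*B - C\<^sup>2)/B)) = pi\<^sup>2/(A*B - C\<^sup>2)"
      using B det by (simp add: field_simps power2_eq_square)
    also have "sqrt (pi\<^sup>2/(A*B - C\<^sup>2)) = pi / sqrt (A*B - C\<^sup>2)"
      by (simp add: real_sqrt_divide)
    finally have 1: "sqrt (pi/B) * sqrt (pi/((A*B - C\<^sup>2)/B)) = pi / sqrt (A*B - C\<^sup>2)" .
    have 2: "E\<^sup>2/(4*B) + ((D*B - C*E)/B)\<^sup>2/(4*((A*B - C\<^sup>2)/B)) = (B*D\<^sup>2 - 2*C*D*E + A*E\<^sup>2)/(4*(A*B - C\<^sup>2))"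
      using B det by (simp add: field_simps power2_eq_square)
    have 3: "(sqrt (pi/B) * exp (E\<^sup>2/(4*B))) * (sqrt (pi/((A*B - C\<^sup>2)/B)) * exp (((D*B - C*E)/B)\<^sup>2/(4*((A*B - C\<^sup>2)/B))))
       = (sqrt (pi/B) * sqrt (pi/((A*B - C\<^sup>2)/B))) * exp (E\<^sup>2/(4*B) + ((D*B - C*E)/B)\<^sup>2/(4*((A*B - C\<^sup>2)/B)))"
      by (simp add: mult_exp_exp[symmetric] mult_ac)
    show ?thesis
      by (subst ennreal_mult'[symmetric], use B in simp, simp only: 3 1 2)
  qed
  finally show ?thesis .
qed

lemma nn_integral_complex:
  assumes [measurable]: "f \<in> borel_measurable borel"
  shows "(\<integral>\<^sup>+z. f z \<partial>lborel) = (\<integral>\<^sup>+x. \<integral>\<^sup>+y. f (Complex x y) \<partial>lborel \<partial>lborel)"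
proof -
  have m: "(\<lambda>x. Complex (fst x) (snd x)) \<in> lborel \<Otimes>\<^sub>M lborel \<rightarrow>\<^sub>M borel"
    unfolding Complex_eq by measurable
  have "(\<integral>\<^sup>+z. f z \<partial>lborel) = (\<integral>\<^sup>+z. f z \<partial>distr (lborel \<Otimes>\<^sub>M lborel) borel (\<lambda>x. Complex (fst x) (snd x)))"
    by (simp add: lborel_complex)
  also have "\<dots> = (\<integral>\<^sup>+p. f (Complex (fst p) (snd p)) \<partial>(lborel \<Otimes>\<^sub>M lborel))"
    by (rule nn_integral_distr[OF m]) simp
  also have "\<dots> = (\<integral>\<^sup>+x. \<integral>\<^sup>+y. f (Complex x y) \<partial>lborel \<partial>lborel)"
    by (rule lborel.nn_integral_fst[symmetric, where f="\<lambda>p. f (Complex (fst p) (snd p))", simplified])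
       (use m in simp)
  finally show ?thesis .
qed

definition Phi :: "complex \<Rightarrow> complex \<Rightarrow> real" where
  "Phi w e = ((cmod w)\<^sup>2 + Re (e * (cnj w)\<^sup>2)) / (4 * (1 - (cmod e)\<^sup>2))"

lemma master_nn:
  fixes w e :: complex and l :: real
  assumes l: "l > 0" and e: "cmod e < 1"
  shows "(\<integral>\<^sup>+z. ennreal (exp (Re (w*z) + l * Re (e*z\<^sup>2) - l*(cmod z)\<^sup>2)) \<partial>lborel)
       = ennreal (pi / (l * sqrt (1 - (cmod e)\<^sup>2)) * exp (Phi w e / l))"
proof -
  define A where "A = l * (1 - Re e)"
  define B where "B = l * (1 + Re e)"
  define C where "C = l * Im e"
  have ce: "(cmod e)\<^sup>2 = (Re e)\<^sup>2 + (Im e)\<^sup>2" by (simp add: cmod_power2)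
  have e2: "(Re e)\<^sup>2 + (Im e)\<^sup>2 < 1" using e ce
    by (metis abs_square_less_1 abs_norm_cancel)
  have re: "\<bar>Re e\<bar> < 1" using e abs_Re_le_cmod[of e] by linarith
  have A: "A > 0" using l re by (simp add: A_def)
  have B: "B > 0" using l re by (simp add: B_def)
  have det: "A*B - C\<^sup>2 = l\<^sup>2 * (1 - (cmod e)\<^sup>2)"
    unfolding ce A_def B_def C_def by (simp add: power2_eq_square algebra_simps)
  have detp: "A*B - C\<^sup>2 > 0" using det e2 ce l by simp
  have int: "exp (Re (w*Complex x y) + l * Re (e*(Complex x y)\<^sup>2) - l*(cmod (Complex x y))\<^sup>2)
     = exp (-(A*x\<^sup>2 + 2*C*x*y + B*y\<^sup>2) + Re w*x + (- Im w)*y)" for x y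
    unfolding cmod_power2 by (simp add: A_def B_def C_def power2_eq_square algebra_simps)
  have "(\<integral>\<^sup>+z. ennreal (exp (Re (w*z) + l * Re (e*z\<^sup>2) - l*(cmod z)\<^sup>2)) \<partial>lborel)
     = (\<integral>\<^sup>+x. \<integral>\<^sup>+y. ennreal (exp (-(A*x\<^sup>2 + 2*C*x*y + B*y\<^sup>2) + Re w*x + (- Im w)*y)) \<partial>lborel \<partial>lborel)"
    unfolding int[symmetric] by (rule nn_integral_complex) measurable
  also have "\<dots> = ennreal (pi / sqrt (A*B - C\<^sup>2) * exp ((B*(Re w)\<^sup>2 - 2*C*(Re w)*(- Im w) + A*(- Im w)\<^sup>2)/(4*(A*B - C\<^sup>2))))"
    by (rule gauss2_nn[OF A B detp])
  also have "sqrt (A*B - C\<^sup>2) = l * sqrt (1 - (cmod e)\<^sup>2)"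
    using l by (simp add: det real_sqrt_mult)
  also have "(B*(Re w)\<^sup>2 - 2*C*(Re w)*(- Im w) + A*(- Im w)\<^sup>2)/(4*(A*B - C\<^sup>2)) = Phi w e / l"
  proof -
    have N: "B*(Re w)\<^sup>2 - 2*C*(Re w)*(- Im w) + A*(- Im w)\<^sup>2 = l * ((cmod w)\<^sup>2 + Re (e * (cnj w)\<^sup>2))"
      unfolding cmod_power2 by (simp add: A_def B_def C_def power2_eq_square algebra_simps)
    have D: "1 - (cmod e)\<^sup>2 > 0" using e2 ce by simp
    show ?thesis unfolding N det Phi_def using l D by (simp add: field_simps power2_eq_square)
  qed
  finally show ?thesis .
qed

lemma quad_identity:
  fixes er ei wr wi x y D P Q :: real
  assumes "D = 1 - er\<^sup>2 - ei\<^sup>2" "P = 2*D*x - ((1+er)*wr + ei*wi)" "Q = 2*D*y - (- ei*wr - (1-er)*wi)"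
  shows "(wr\<^sup>2+wi\<^sup>2+er*(wr\<^sup>2-wi\<^sup>2)+2*ei*wr*wi)*D - 4*D\<^sup>2*(wr*x - wi*y + er*(x\<^sup>2-y\<^sup>2) - 2*ei*x*y - (x\<^sup>2+y\<^sup>2))
     = (1-er)*P\<^sup>2 + 2*ei*P*Q + (1+er)*Q\<^sup>2"
  unfolding assms by (simp add: power2_eq_square algebra_simps)

lemma quad_le:
  fixes er ei wr wi x y :: real
  assumes "er\<^sup>2 + ei\<^sup>2 < 1"
  shows "wr*x - wi*y + er*(x\<^sup>2-y\<^sup>2) - 2*ei*x*y - (x\<^sup>2+y\<^sup>2) \<le> (wr\<^sup>2+wi\<^sup>2+er*(wr\<^sup>2-wi\<^sup>2)+2*ei*wr*wi)/(4*(1-er\<^sup>2-ei\<^sup>2))"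
proof -
  define D where "D = 1 - er\<^sup>2 - ei\<^sup>2"
  define P where "P = 2*D*x - ((1+er)*wr + ei*wi)"
  define Q where "Q = 2*D*y - (- ei*wr - (1-er)*wi)"
  have D: "D > 0" using assms by (simp add: D_def)
  have er: "er < 1"
  proof (rule ccontr)
    assume "\<not> er < 1" then have "1 \<le> er\<^sup>2" by (simp add: one_le_power)
    then show False using assms by (smt (verit) zero_le_power2)
  qed
  have id: "(wr\<^sup>2+wi\<^sup>2+er*(wr\<^sup>2-wi\<^sup>2)+2*ei*wr*wi)*D - 4*D\<^sup>2*(wr*x - wi*y + er*(x\<^sup>2-y\<^sup>2) - 2*ei*x*y - (x\<^sup>2+y\<^sup>2))
     = (1-er)*P\<^sup>2 + 2*ei*P*Q + (1+er)*Q\<^sup>2"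
    by (rule quad_identity[OF D_def P_def Q_def])
  have id2: "(1-er)*((1-er)*P\<^sup>2 + 2*ei*P*Q + (1+er)*Q\<^sup>2) = ((1-er)*P + ei*Q)\<^sup>2 + D*Q\<^sup>2"
    unfolding D_def by (simp add: power2_eq_square algebra_simps)
  have "0 \<le> ((1-er)*P + ei*Q)\<^sup>2 + D*Q\<^sup>2" using D by simp
  then have "0 \<le> (1-er)*P\<^sup>2 + 2*ei*P*Q + (1+er)*Q\<^sup>2"
    using er id2 by (metis diff_gt_0_iff_gt zero_le_mult_iff not_less)
  then have "(wr*x - wi*y + er*(x\<^sup>2-y\<^sup>2) - 2*ei*x*y - (x\<^sup>2+y\<^sup>2)) * (4*D\<^sup>2) \<le> (wr\<^sup>2+wi\<^sup>2+er*(wr\<^sup>2-wi\<^sup>2)+2*ei*wr*wi)*D"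
    using id by (simp add: mult.commute)
  then have "wr*x - wi*y + er*(x\<^sup>2-y\<^sup>2) - 2*ei*x*y - (x\<^sup>2+y\<^sup>2) \<le> (wr\<^sup>2+wi\<^sup>2+er*(wr\<^sup>2-wi\<^sup>2)+2*ei*wr*wi)*D / (4*D\<^sup>2)"
    using D by (simp add: pos_le_divide_eq)
  also have "\<dots> = (wr\<^sup>2+wi\<^sup>2+er*(wr\<^sup>2-wi\<^sup>2)+2*ei*wr*wi) / (4*D)"
    using D by (simp add: power2_eq_square)
  finally show ?thesis unfolding D_def .
qed

lemma quad_eq:
  fixes er ei wr wi :: real
  assumes "er\<^sup>2 + ei\<^sup>2 < 1"
  defines "x \<equiv> ((1+er)*wr + ei*wi) / (2*(1-er\<^sup>2-ei\<^sup>2))"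
  defines "y \<equiv> (- ei*wr - (1-er)*wi) / (2*(1-er\<^sup>2-ei\<^sup>2))"
  shows "wr*x - wi*y + er*(x\<^sup>2-y\<^sup>2) - 2*ei*x*y - (x\<^sup>2+y\<^sup>2) = (wr\<^sup>2+wi\<^sup>2+er*(wr\<^sup>2-wi\<^sup>2)+2*ei*wr*wi)/(4*(1-er\<^sup>2-ei\<^sup>2))"
proof -
  define D where "D = 1 - er\<^sup>2 - ei\<^sup>2"
  have D: "D > 0" using assms by (simp add: D_def)
  have P: "2*D*x - ((1+er)*wr + ei*wi) = 0" using D unfolding x_def D_def[symmetric] by simp
  have Q: "2*D*y - (- ei*wr - (1-er)*wi) = 0" using D unfolding y_def D_def[symmetric] by simp
  have "(wr\<^sup>2+wi\<^sup>2+er*(wr\<^sup>2-wi\<^sup>2)+2*ei*wr*wi)*D - 4*D\<^sup>2*(wr*x - wi*y + er*(x\<^sup>2-y\<^sup>2) - 2*ei*x*y - (x\<^sup>2+y\<^sup>2)) = 0"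
    using quad_identity[where x=x and y=y and wr=wr and wi=wi and er=er and ei=ei and D=D, OF D_def refl refl] P Q by simp
  then have "(wr*x - wi*y + er*(x\<^sup>2-y\<^sup>2) - 2*ei*x*y - (x\<^sup>2+y\<^sup>2)) = (wr\<^sup>2+wi\<^sup>2+er*(wr\<^sup>2-wi\<^sup>2)+2*ei*wr*wi)*D / (4*D\<^sup>2)"
    using D by (simp add: eq_divide_eq mult.commute)
  also have "\<dots> = (wr\<^sup>2+wi\<^sup>2+er*(wr\<^sup>2-wi\<^sup>2)+2*ei*wr*wi) / (4*D)"
    using D by (simp add: power2_eq_square)
  finally show ?thesis unfolding D_def .
qed

lemma Phi_real: "Phi w e = ((Re w)\<^sup>2+(Im w)\<^sup>2+Re e*((Re w)\<^sup>2-(Im w)\<^sup>2)+2*Im e*Re w*Im w)/(4*(1-(Re e)\<^sup>2-(Im e)\<^sup>2))"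
  unfolding Phi_def cmod_power2 by (simp add: power2_eq_square algebra_simps)

lemma f_real: "Re (w*z) + Re (e*z\<^sup>2) - (cmod z)\<^sup>2
   = Re w*Re z - Im w*Im z + Re e*((Re z)\<^sup>2-(Im z)\<^sup>2) - 2*Im e*Re z*Im z - ((Re z)\<^sup>2+(Im z)\<^sup>2)"
  unfolding cmod_power2 by (simp add: power2_eq_square algebra_simps)

lemma Phi_ge:
  assumes "cmod e < 1"
  shows "Re (w*z) + Re (e*z\<^sup>2) - (cmod z)\<^sup>2 \<le> Phi w e"
proof -
  have "(Re e)\<^sup>2 + (Im e)\<^sup>2 < 1" using assms
    by (metis abs_norm_cancel abs_square_less_1 cmod_power2)
  then show ?thesis unfolding Phi_real f_real by (rule quad_le)
qed

lemma Phi_attained: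
  assumes "cmod e < 1"
  shows "\<exists>z. Re (w*z) + Re (e*z\<^sup>2) - (cmod z)\<^sup>2 = Phi w e"
proof -
  have h: "(Re e)\<^sup>2 + (Im e)\<^sup>2 < 1" using assms
    by (metis abs_norm_cancel abs_square_less_1 cmod_power2)
  define z where "z = Complex (((1+Re e)*Re w + Im e*Im w) / (2*(1-(Re e)\<^sup>2-(Im e)\<^sup>2)))
                            ((- Im e*Re w - (1-Re e)*Im w) / (2*(1-(Re e)\<^sup>2-(Im e)\<^sup>2)))"
  have "Re (w*z) + Re (e*z\<^sup>2) - (cmod z)\<^sup>2 = Phi w e"
    unfolding Phi_real f_real z_def complex.sel by (rule quad_eq[OF h])
  then show ?thesis by blast
qed

lemma Phi_scale: "Phi (complex_of_real t * w) e = t\<^sup>2 * Phi w e"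
  unfolding Phi_def by (simp add: norm_mult power_mult_distrib algebra_simps)

lemma gauss_dens_nonneg: "\<alpha> \<ge> 0 \<Longrightarrow> gauss_dens \<alpha> z \<ge> 0"
  unfolding gauss_dens_def by simp

lemma integral_via_master:
  fixes w e :: complex and l K :: real
  assumes l: "l > 0" and e: "cmod e < 1" and K: "K \<ge> 0"
    and f: "\<And>z. f z = K * exp (Re (w*z) + l * Re (e*z\<^sup>2) - l*(cmod z)\<^sup>2)"
  shows "(\<integral>z. f z \<partial>lborel) = K * (pi / (l * sqrt (1 - (cmod e)\<^sup>2)) * exp (Phi w e / l))"
proof -
  have fm: "f = (\<lambda>z. K * exp (Re (w*z) + l * Re (e*z\<^sup>2) - l*(cmod z)\<^sup>2))" using f by auto
  have "(cmod e)\<^sup>2 < 1" using e by (metis abs_norm_cancel abs_square_less_1)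
  then have pos: "0 \<le> pi / (l * sqrt (1 - (cmod e)\<^sup>2)) * exp (Phi w e / l)"
    using l by (simp add: less_imp_le)
  have "(\<integral>z. f z \<partial>lborel) = enn2real (\<integral>\<^sup>+z. ennreal (f z) \<partial>lborel)"
    unfolding fm by (rule integral_eq_nn_integral) (use K in \<open>auto\<close>)
  also have "(\<integral>\<^sup>+z. ennreal (f z) \<partial>lborel) = (\<integral>\<^sup>+z. ennreal K * ennreal (exp (Re (w*z) + l * Re (e*z\<^sup>2) - l*(cmod z)\<^sup>2)) \<partial>lborel)"
    unfolding fm using K by (simp add: ennreal_mult)
  also have "\<dots> = ennreal K * (\<integral>\<^sup>+z. ennreal (exp (Re (w*z) + l * Re (e*z\<^sup>2) - l*(cmod z)\<^sup>2)) \<partial>lborel)"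
    by (rule nn_integral_cmult) measurable
  also have "\<dots> = ennreal K * ennreal (pi / (l * sqrt (1 - (cmod e)\<^sup>2)) * exp (Phi w e / l))"
    by (simp only: master_nn[OF l e])
  also have "enn2real \<dots> = K * (pi / (l * sqrt (1 - (cmod e)\<^sup>2)) * exp (Phi w e / l))"
  proof -
    have "0 \<le> K * (pi / (l * sqrt (1 - (cmod e)\<^sup>2)) * exp (Phi w e / l))" by (rule mult_nonneg_nonneg[OF K pos])
    then show ?thesis using K pos by (simp only: ennreal_mult[symmetric] enn2real_ennreal)
  qed
  finally show ?thesis .
qed

lemma norm_int:
  fixes \<alpha> q :: real and a c :: complex
  assumes \<alpha>: "\<alpha> > 0" and q: "q > 0" and c: "cmod c < 1"
  shows "(\<integral>z. (cmod (exp (complex_of_real \<alpha> * a * z + complex_of_real (\<alpha>/2) * c * z\<^sup>2))) powr q * gauss_dens (\<alpha>*q/2) z \<partial>lborel)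
     = exp (2*q*\<alpha>*Phi a c) / sqrt (1 - (cmod c)\<^sup>2)"
proof -
  define l where "l = \<alpha>*q/2"
  have l: "l > 0" using \<alpha> q by (simp add: l_def)
  have "(\<integral>z. (cmod (exp (complex_of_real \<alpha> * a * z + complex_of_real (\<alpha>/2) * c * z\<^sup>2))) powr q * gauss_dens (\<alpha>*q/2) z \<partial>lborel)
     = l/pi * (pi / (l * sqrt (1 - (cmod c)\<^sup>2)) * exp (Phi (complex_of_real (q*\<alpha>) * a) c / l))"
  proof (rule integral_via_master[OF l c])
    show "0 \<le> l/pi" using l by simp
    fix z
    show "(cmod (exp (complex_of_real \<alpha> * a * z + complex_of_real (\<alpha>/2) * c * z\<^sup>2))) powr q * gauss_dens (\<alpha>*q/2) z
       = l/pi * exp (Re (complex_of_real (q*\<alpha>) * a * z) + l * Re (c*z\<^sup>2) - l*(cmod z)\<^sup>2)"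
      unfolding norm_exp_eq_Re exp_powr_real gauss_dens_def l_def
      by (simp add: mult_exp_exp algebra_simps) (auto simp: field_simps)
  qed
  also have "\<dots> = exp (2*q*\<alpha>*Phi a c) / sqrt (1 - (cmod c)\<^sup>2)"
  proof -
    have "(cmod c)\<^sup>2 < 1" using c by (metis abs_norm_cancel abs_square_less_1)
    then show ?thesis using l \<alpha> q unfolding Phi_scale l_def by (simp add: power2_eq_square)
  qed
  finally show ?thesis .
qed

lemma absinner_int:
  fixes \<alpha> :: real and a b c d :: complex
  assumes \<alpha>: "\<alpha> > 0" and c: "cmod c < 1" and d: "cmod d < 1"
  shows "(\<integral>z. cmod (complex_of_real (gauss_dens \<alpha> z) *
            (exp (complex_of_real \<alpha> * a * z + complex_of_real (\<alpha>/2) * c * z\<^sup>2) *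
             cnj (exp (complex_of_real \<alpha> * b * z + complex_of_real (\<alpha>/2) * d * z\<^sup>2)))) \<partial>lborel)
     = exp (\<alpha> * Phi (a+b) ((c+d)/2)) / sqrt (1 - (cmod ((c+d)/2))\<^sup>2)"
proof -
  have e: "cmod ((c+d)/2) < 1"
  proof -
    have h: "cmod ((c+d)/2) \<le> (cmod c + cmod d)/2" by (simp add: norm_triangle_ineq)
    have "(cmod c + cmod d)/2 < 1" using c d by simp
    then show ?thesis by (rule le_less_trans[OF h])
  qed
  have "(\<integral>z. cmod (complex_of_real (gauss_dens \<alpha> z) *
            (exp (complex_of_real \<alpha> * a * z + complex_of_real (\<alpha>/2) * c * z\<^sup>2) *
             cnj (exp (complex_of_real \<alpha> * b * z + complex_of_real (\<alpha>/2) * d * z\<^sup>2)))) \<partial>lborel)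
     = \<alpha>/pi * (pi / (\<alpha> * sqrt (1 - (cmod ((c+d)/2))\<^sup>2)) * exp (Phi (complex_of_real \<alpha> * (a+b)) ((c+d)/2) / \<alpha>))"
  proof (rule integral_via_master[OF \<alpha> e])
    show "0 \<le> \<alpha>/pi" using \<alpha> by simp
    fix z
    show "cmod (complex_of_real (gauss_dens \<alpha> z) *
            (exp (complex_of_real \<alpha> * a * z + complex_of_real (\<alpha>/2) * c * z\<^sup>2) *
             cnj (exp (complex_of_real \<alpha> * b * z + complex_of_real (\<alpha>/2) * d * z\<^sup>2))))
       = \<alpha>/pi * exp (Re (complex_of_real \<alpha> * (a+b) * z) + \<alpha> * Re ((c+d)/2*z\<^sup>2) - \<alpha>*(cmod z)\<^sup>2)"
      using \<alpha> unfolding norm_mult complex_mod_cnj norm_exp_eq_Re norm_of_real abs_of_nonneg[OF gauss_dens_nonneg[OF less_imp_le[OF \<alpha>]]] gauss_dens_def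
      by (simp add: mult_exp_exp algebra_simps) (simp add: field_simps)
  qed
  also have "\<dots> = exp (\<alpha> * Phi (a+b) ((c+d)/2)) / sqrt (1 - (cmod ((c+d)/2))\<^sup>2)"
  proof -
    have "(cmod ((c+d)/2))\<^sup>2 < 1" using e by (metis abs_norm_cancel abs_square_less_1)
    then show ?thesis using \<alpha> unfolding Phi_scale by (simp add: power2_eq_square)
  qed
  finally show ?thesis .
qed

lemma conj_exp_props:
  assumes "p > 1"
  shows "conj_exp p > 1" "1/p + 1/conj_exp p = 1"
  using assms unfolding conj_exp_def by (auto simp: field_simps)

lemma Cp_pos: "p > 1 \<Longrightarrow> Cp p > 0"
  unfolding Cp_def using conj_exp_props(1)[of p] by simp

lemma prefactor:
  fixes p X Y E :: real
  assumes p: "p > 1" and X: "X > 0" and Y: "Y > 0" and XYE: "X/2 + Y/2 \<le> E"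
  shows "X powr (1/p) * Y powr (1/conj_exp p) \<le> Cp p * E"
proof -
  define q where "q = conj_exp p"
  have q: "q > 1" and pq: "1/p + 1/q = 1" using conj_exp_props[OF p] by (auto simp: q_def)
  have "(p*X/2) powr (1/p) * (q*Y/2) powr (1/q) \<le> (1/p)*(p*X/2) + (1/q)*(q*Y/2)"
    by (rule Youngs_inequality_0) (use p q X Y pq in auto)
  also have "\<dots> = X/2 + Y/2" using p q by simp
  finally have Y1: "(p*X/2) powr (1/p) * (q*Y/2) powr (1/q) \<le> E" using XYE by linarith
  define k where "k = (p/2) powr (1/p) * (q/2) powr (1/q)"
  have k: "k > 0" using p q by (simp add: k_def)
  have "(p*X/2) powr (1/p) * (q*Y/2) powr (1/q) = k * (X powr (1/p) * Y powr (1/q))"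
    unfolding k_def using p q X Y by (simp add: powr_mult[symmetric] mult_ac)
  with Y1 have 1: "k * (X powr (1/p) * Y powr (1/q)) \<le> E" by simp
  have "k * Cp p = 1"
  proof -
    have "k = p powr (1/p) * q powr (1/q) / (2 powr (1/p) * 2 powr (1/q))"
      unfolding k_def using p q by (simp add: powr_divide)
    also have "2 powr (1/p) * 2 powr (1/q) = (2::real)"
      by (simp add: powr_add[symmetric] pq)
    finally have kk: "k = p powr (1/p) * q powr (1/q) / 2" .
    have "k * Cp p = (p powr (1/p) * p powr (- 1 / p)) * (q powr (1/q) * q powr (- 1 / q))"
      unfolding kk Cp_def q_def[symmetric] by (simp add: mult_ac)
    also have "\<dots> = 1" using p q by (simp add: powr_add[symmetric])
    finally show ?thesis .
  qed
  then have "Cp p = 1/k" using k by (simp add: field_simps)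
  moreover have "X powr (1/p) * Y powr (1/q) \<le> E / k"
    using 1 k by (simp add: pos_le_divide_eq mult.commute)
  ultimately show ?thesis unfolding q_def[symmetric] by simp
qed

lemma Phi_convex:
  assumes c: "cmod c < 1" and d: "cmod d < 1"
  shows "Phi (a+b) ((c+d)/2) \<le> 2 * Phi a c + 2 * Phi b d"
proof -
  have e: "cmod ((c+d)/2) < 1"
  proof -
    have h: "cmod ((c+d)/2) \<le> (cmod c + cmod d)/2" by (simp add: norm_triangle_ineq)
    have "(cmod c + cmod d)/2 < 1" using c d by simp
    then show ?thesis by (rule le_less_trans[OF h])
  qed
  obtain z where z: "Re ((a+b)*z) + Re ((c+d)/2*z\<^sup>2) - (cmod z)\<^sup>2 = Phi (a+b) ((c+d)/2)"
    using Phi_attained[OF e] by blast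
  have "Re ((a+b)*z) + Re ((c+d)/2*z\<^sup>2) - (cmod z)\<^sup>2
     = 2 * (Re (a*(z/2)) + Re (c*(z/2)\<^sup>2) - (cmod (z/2))\<^sup>2) + 2 * (Re (b*(z/2)) + Re (d*(z/2)\<^sup>2) - (cmod (z/2))\<^sup>2)"
    unfolding cmod_power2 by (simp add: power2_eq_square algebra_simps) (simp add: field_simps)
  also have "\<dots> \<le> 2 * Phi a c + 2 * Phi b d"
    by (intro add_mono mult_left_mono Phi_ge c d) simp_all
  finally show ?thesis using z by simp
qed

lemma cmod2_lt1: "cmod c < 1 \<Longrightarrow> (cmod c)\<^sup>2 < 1"
  by (metis abs_norm_cancel abs_square_less_1)

lemma sqrt_powr: "0 < (X::real) \<Longrightarrow> sqrt (X powr a) = X powr (a/2)"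
proof -
  assume X: "0 < X"
  have "sqrt (X powr a) = (X powr a) powr (1/2)" using X by (simp add: powr_half_sqrt)
  also have "\<dots> = X powr (a/2)" by (simp add: powr_powr)
  finally show ?thesis .
qed

lemma sqrt_powr_inv: "0 < (X::real) \<Longrightarrow> sqrt (X powr (1/p)) = X powr (1/(2*p))"
proof -
  assume X: "0 < X"
  have "sqrt (X powr (1/p)) = X powr ((1/p)/2)" by (rule sqrt_powr[OF X])
  also have "(1/p)/2 = 1/(2*p)" by simp
  finally show ?thesis .
qed

lemma aux_div: "0 < (A::real) \<Longrightarrow> 0 < S \<Longrightarrow> A \<le> C * S \<Longrightarrow> 1 / S \<le> C / A"
  by (simp add: field_simps)

lemma powr_neg_inv: "(x::real) powr (-1/(2*r)) = 1 / x powr (1/(2*r))"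
  unfolding minus_divide_left[symmetric] by (rule powr_minus_divide)

lemma gnorm_gauss:
  fixes \<alpha> q :: real and a c :: complex
  assumes \<alpha>: "\<alpha> > 0" and q: "q > 0" and c: "cmod c < 1"
  shows "gnorm q \<alpha> (\<lambda>z. exp (complex_of_real \<alpha> * a * z + complex_of_real (\<alpha>/2) * c * z\<^sup>2))
       = exp (2*\<alpha>*Phi a c) * (1 - (cmod c)\<^sup>2) powr (-1/(2*q))"
proof -
  define Y where "Y = 1 - (cmod c)\<^sup>2"
  have Y: "Y > 0" using cmod2_lt1[OF c] by (simp add: Y_def)
  have "gnorm q \<alpha> (\<lambda>z. exp (complex_of_real \<alpha> * a * z + complex_of_real (\<alpha>/2) * c * z\<^sup>2))
      = (exp (2*q*\<alpha>*Phi a c) / sqrt Y) powr (1/q)"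
    unfolding gnorm_def norm_int[OF \<alpha> q c] Y_def ..
  also have "\<dots> = exp (2*q*\<alpha>*Phi a c) powr (1/q) / (Y powr (1/2)) powr (1/q)"
    using Y by (simp add: powr_divide powr_half_sqrt)
  also have "\<dots> = exp (2*\<alpha>*Phi a c) / Y powr (1/(2*q))"
    using q by (simp add: exp_powr_real powr_powr)
  also have "\<dots> = exp (2*\<alpha>*Phi a c) * Y powr (-(1/(2*q)))"
    by (simp only: powr_minus divide_inverse)
  finally show ?thesis unfolding Y_def by simp
qed

lemma gnorm_pos:
  fixes \<alpha> q :: real and a c :: complex
  assumes \<alpha>: "\<alpha> > 0" and q: "q > 0" and c: "cmod c < 1"
  shows "gnorm q \<alpha> (\<lambda>z. exp (complex_of_real \<alpha> * a * z + complex_of_real (\<alpha>/2) * c * z\<^sup>2)) > 0"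
  unfolding gnorm_gauss[OF assms] using cmod2_lt1[OF c] by simp

lemma e_bound:
  fixes c d :: complex
  shows "(1 - (cmod c)\<^sup>2)/2 + (1 - (cmod d)\<^sup>2)/2 \<le> 1 - (cmod ((c+d)/2))\<^sup>2"
proof -
  have 1: "(1 - (cmod ((c+d)/2))\<^sup>2) - ((1 - (cmod c)\<^sup>2)/2 + (1 - (cmod d)\<^sup>2)/2) = ((Re c - Re d)\<^sup>2 + (Im c - Im d)\<^sup>2)/4"
    unfolding cmod_power2 by (simp add: power2_eq_square field_simps)
  have 2: "0 \<le> ((Re c - Re d)\<^sup>2 + (Im c - Im d)\<^sup>2)/4" by simp
  show ?thesis using 1 2 by linarith
qed

lemma upper_bound:
  fixes \<alpha> p :: real and a b c d :: complex
  assumes \<alpha>: "\<alpha> > 0" and p: "p > 1" and c: "cmod c < 1" and d: "cmod d < 1"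
  shows "Rratio p \<alpha> (\<lambda>z. exp (complex_of_real \<alpha> * a * z + complex_of_real (\<alpha>/2) * c * z\<^sup>2))
                    (\<lambda>z. exp (complex_of_real \<alpha> * b * z + complex_of_real (\<alpha>/2) * d * z\<^sup>2)) \<le> sqrt (Cp p)"
proof -
  define q where "q = conj_exp p"
  have q: "q > 1" using conj_exp_props[OF p] by (simp add: q_def)
  define g where "g = (\<lambda>z. exp (complex_of_real \<alpha> * a * z + complex_of_real (\<alpha>/2) * c * z\<^sup>2))"
  define h where "h = (\<lambda>z. exp (complex_of_real \<alpha> * b * z + complex_of_real (\<alpha>/2) * d * z\<^sup>2))"
  define X where "X = 1 - (cmod c)\<^sup>2"
  define Y where "Y = 1 - (cmod d)\<^sup>2"
  define E where "E = 1 - (cmod ((c+d)/2))\<^sup>2"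
  have X: "X > 0" using cmod2_lt1[OF c] by (simp add: X_def)
  have Y: "Y > 0" using cmod2_lt1[OF d] by (simp add: Y_def)
  have XYE: "X/2 + Y/2 \<le> E" unfolding X_def Y_def E_def by (rule e_bound)
  have E: "E > 0" using X Y XYE by linarith
  have N1: "gnorm p \<alpha> g = exp (2*\<alpha>*Phi a c) * X powr (-1/(2*p))"
    unfolding g_def X_def using gnorm_gauss[OF \<alpha> _ c] p by simp
  have N2: "gnorm q \<alpha> h = exp (2*\<alpha>*Phi b d) * Y powr (-1/(2*q))"
    unfolding h_def Y_def using gnorm_gauss[OF \<alpha> _ d] q by simp
  have inner: "cmod (ginner \<alpha> g h) \<le> exp (\<alpha> * Phi (a+b) ((c+d)/2)) / sqrt E"
  proof -
    have "cmod (ginner \<alpha> g h) \<le> (\<integral>z. cmod (complex_of_real (gauss_dens \<alpha> z) * (g z * cnj (h z))) \<partial>lborel)"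
      unfolding ginner_def by (rule integral_norm_bound)
    also have "\<dots> = exp (\<alpha> * Phi (a+b) ((c+d)/2)) / sqrt E"
      unfolding g_def h_def E_def by (rule absinner_int[OF \<alpha> c d])
    finally show ?thesis .
  qed
  have pre: "X powr (1/p) * Y powr (1/q) \<le> Cp p * E"
    unfolding q_def by (rule prefactor[OF p X Y XYE])
  have Cp: "Cp p > 0" by (rule Cp_pos[OF p])
  have pre2: "1 / sqrt E \<le> sqrt (Cp p) * (X powr (-1/(2*p)) * Y powr (-1/(2*q)))"
  proof -
    have "sqrt (X powr (1/p) * Y powr (1/q)) \<le> sqrt (Cp p * E)"
      using pre by (rule real_sqrt_le_mono)
    also have "sqrt (X powr (1/p) * Y powr (1/q)) = X powr (1/(2*p)) * Y powr (1/(2*q))"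
    proof -
      have "sqrt (X powr (1/p) * Y powr (1/q)) = sqrt (X powr (1/p)) * sqrt (Y powr (1/q))"
        by (rule real_sqrt_mult)
      also have "sqrt (X powr (1/p)) = X powr (1/(2*p))"
        by (rule sqrt_powr_inv[OF X])
      also have "sqrt (Y powr (1/q)) = Y powr (1/(2*q))"
        by (rule sqrt_powr_inv[OF Y])
      finally show ?thesis .
    qed
    finally have s: "X powr (1/(2*p)) * Y powr (1/(2*q)) \<le> sqrt (Cp p) * sqrt E"
      by (simp add: real_sqrt_mult)
    have pos: "X powr (1/(2*p)) * Y powr (1/(2*q)) > 0" using X Y by simp
    have "1 / sqrt E \<le> sqrt (Cp p) / (X powr (1/(2*p)) * Y powr (1/(2*q)))"
      by (rule aux_div[OF pos _ s]) (use E in simp)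
    also have "\<dots> = sqrt (Cp p) * (X powr (-1/(2*p)) * Y powr (-1/(2*q)))"
      unfolding powr_neg_inv by simp
    finally show ?thesis .
  qed
  have ex: "exp (\<alpha> * Phi (a+b) ((c+d)/2)) \<le> exp (2*\<alpha>*Phi a c) * exp (2*\<alpha>*Phi b d)"
  proof -
    have "\<alpha> * Phi (a+b) ((c+d)/2) \<le> \<alpha> * (2 * Phi a c + 2 * Phi b d)"
      using Phi_convex[OF c d, of a b] \<alpha> by (simp add: mult_left_mono)
    then show ?thesis by (simp add: mult_exp_exp algebra_simps)
  qed
  have "exp (\<alpha> * Phi (a+b) ((c+d)/2)) / sqrt E
     \<le> (exp (2*\<alpha>*Phi a c) * exp (2*\<alpha>*Phi b d)) * (sqrt (Cp p) * (X powr (-1/(2*p)) * Y powr (-1/(2*q))))"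
  proof -
    have "exp (\<alpha> * Phi (a+b) ((c+d)/2)) * (1 / sqrt E)
       \<le> (exp (2*\<alpha>*Phi a c) * exp (2*\<alpha>*Phi b d)) * (sqrt (Cp p) * (X powr (-1/(2*p)) * Y powr (-1/(2*q))))"
      by (rule mult_mono[OF ex pre2]) (use E in simp_all)
    then show ?thesis by simp
  qed
  also have "\<dots> = sqrt (Cp p) * (gnorm p \<alpha> g * gnorm q \<alpha> h)"
    unfolding N1 N2 by (simp add: mult_ac)
  finally have main: "cmod (ginner \<alpha> g h) \<le> sqrt (Cp p) * (gnorm p \<alpha> g * gnorm q \<alpha> h)"
    using inner by linarith
  have npos: "gnorm p \<alpha> g * gnorm q \<alpha> h > 0"
    unfolding N1 N2 using X Y by simp
  show ?thesis
    unfolding Rratio_def g_def[symmetric] h_def[symmetric] q_def[symmetric]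
    using main npos by (simp add: divide_le_eq)
qed

lemma char_gauss:
  fixes B t :: real
  assumes B: "B > 0"
  shows "(\<integral>y. complex_of_real (exp (-B*y\<^sup>2)) * iexp (t*y) \<partial>lborel) = complex_of_real (sqrt (pi/B) * exp (-t\<^sup>2/(4*B)))"
proof -
  define c where "c = sqrt (2*B)"
  have c: "c > 0" using B by (simp add: c_def)
  have c2: "c\<^sup>2 = 2*B" using B by (simp add: c_def)
  define I where "I = (\<integral>y. complex_of_real (exp (-B*y\<^sup>2)) * iexp (t*y) \<partial>lborel)"
  have "char std_normal_distribution (t/c) = complex_of_real (exp (- ((t/c)\<^sup>2) / 2))"
    by (simp add: char_std_normal_distribution)
  also have "char std_normal_distribution (t/c) = (\<integral>x. std_normal_density x *\<^sub>R iexp ((t/c)*x) \<partial>lborel)"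
    unfolding char_def by (rule integral_density) auto
  also have "\<dots> = \<bar>c\<bar> *\<^sub>R (\<integral>y. std_normal_density (0 + c*y) *\<^sub>R iexp ((t/c)*(0 + c*y)) \<partial>lborel)"
    using c by (intro lborel_integral_real_affine) simp
  also have "(\<lambda>y. std_normal_density (0 + c*y) *\<^sub>R iexp ((t/c)*(0 + c*y)))
      = (\<lambda>y. (1/sqrt (2*pi)) *\<^sub>R (complex_of_real (exp (-B*y\<^sup>2)) * iexp (t*y)))"
  proof
    fix y
    have "(c*y)\<^sup>2 / 2 = B*y\<^sup>2" using c2 by (simp add: power_mult_distrib)
    then show "std_normal_density (0 + c*y) *\<^sub>R iexp ((t/c)*(0 + c*y))
      = (1/sqrt (2*pi)) *\<^sub>R (complex_of_real (exp (-B*y\<^sup>2)) * iexp (t*y))"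
      using c unfolding std_normal_density_def by (simp add: scaleR_conv_of_real)
  qed
  also have "(\<integral>y. (1/sqrt (2*pi)) *\<^sub>R (complex_of_real (exp (-B*y\<^sup>2)) * iexp (t*y)) \<partial>lborel)
      = (1/sqrt (2*pi)) *\<^sub>R I"
    unfolding I_def by (rule integral_scaleR_right)
  finally have eq: "complex_of_real (exp (- ((t/c)\<^sup>2) / 2)) = complex_of_real (c / sqrt (2*pi)) * I"
    using c by (simp add: scaleR_conv_of_real)
  have "I = complex_of_real (sqrt (2*pi) / c * exp (- ((t/c)\<^sup>2) / 2))"
    using eq c by (simp add: field_simps)
  also have "sqrt (2*pi) / c = sqrt (pi/B)"
    unfolding c_def using B by (simp add: real_sqrt_divide[symmetric])
  also have "- ((t/c)\<^sup>2) / 2 = -t\<^sup>2/(4*B)"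
    using c2 B by (simp add: power_divide)
  finally show ?thesis unfolding I_def .
qed

lemma char_gauss_integrable:
  fixes B t :: real
  assumes B: "B > 0"
  shows "integrable lborel (\<lambda>y. complex_of_real (exp (-B*y\<^sup>2)) * iexp (t*y))"
proof (rule Bochner_Integration.integrable_bound[where f="\<lambda>y. exp (-B*y\<^sup>2 + 0*y)"])
  show "integrable lborel (\<lambda>y. exp (-B*y\<^sup>2 + 0*y))"
    using gauss1_hbi[OF B, of 0] unfolding has_bochner_integral_iff by blast
  show "AE y in lborel. norm (complex_of_real (exp (-B*y\<^sup>2)) * iexp (t*y)) \<le> norm (exp (-B*y\<^sup>2 + 0*y))"
    by (simp add: norm_mult)
qed measurable

lemma integral_complex_pair:
  fixes F :: "complex \<Rightarrow> complex"
  assumes Fm[measurable]: "F \<in> borel_measurable borel"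
    and int: "integrable (lborel \<Otimes>\<^sub>M lborel) (\<lambda>p. F (Complex (fst p) (snd p)))"
  shows "(\<integral>z. F z \<partial>lborel) = (\<integral>x. (\<integral>y. F (Complex x y) \<partial>lborel) \<partial>lborel)"
proof -
  have m: "(\<lambda>x. Complex (fst x) (snd x)) \<in> lborel \<Otimes>\<^sub>M lborel \<rightarrow>\<^sub>M borel"
    unfolding Complex_eq by measurable
  have "(\<integral>z. F z \<partial>lborel) = (\<integral>z. F z \<partial>distr (lborel \<Otimes>\<^sub>M lborel) borel (\<lambda>x. Complex (fst x) (snd x)))"
    by (simp add: lborel_complex)
  also have "\<dots> = (\<integral>p. F (Complex (fst p) (snd p)) \<partial>(lborel \<Otimes>\<^sub>M lborel))"
    by (rule integral_distr[OF m Fm])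
  also have "\<dots> = (\<integral>x. (\<integral>y. F (Complex x y) \<partial>lborel) \<partial>lborel)"
    using lborel_pair.integral_fst'[OF int] by simp
  finally show ?thesis .
qed

lemma cmodC: "(complex_of_real (cmod (Complex x y)))\<^sup>2 = complex_of_real (x\<^sup>2 + y\<^sup>2)"
  by (simp only: of_real_power[symmetric] cmod_power2 complex.sel)

lemma inner_family:
  fixes \<alpha> u v :: real
  assumes \<alpha>: "\<alpha> > 0" and u: "0 \<le> u" "u < 1" and v: "0 \<le> v" "v < 1"
  shows "ginner \<alpha> (\<lambda>z. exp (complex_of_real \<alpha> * 0 * z + complex_of_real (\<alpha>/2) * complex_of_real u * z\<^sup>2))
                  (\<lambda>z. exp (complex_of_real \<alpha> * 0 * z + complex_of_real (\<alpha>/2) * complex_of_real v * z\<^sup>2))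
       = complex_of_real (1 / sqrt (1 - u * v))"
proof -
  define A where "A = \<alpha> * (1 - (u+v)/2)"
  define B where "B = \<alpha> * (1 + (u+v)/2)"
  define k where "k = \<alpha> * (u - v)"
  have A: "A > 0" using \<alpha> u v unfolding A_def by (intro mult_pos_pos) (auto simp: field_simps)
  have B: "B > 0" using \<alpha> u v unfolding B_def by (intro mult_pos_pos) (auto simp: field_simps)
  define F where "F = (\<lambda>z. complex_of_real (gauss_dens \<alpha> z) *
     (exp (complex_of_real \<alpha> * 0 * z + complex_of_real (\<alpha>/2) * complex_of_real u * z\<^sup>2) *
      cnj (exp (complex_of_real \<alpha> * 0 * z + complex_of_real (\<alpha>/2) * complex_of_real v * z\<^sup>2))))"
  define G where "G = (\<lambda>x y. complex_of_real (\<alpha>/pi * exp (-A*x\<^sup>2)) * (complex_of_real (exp (-B*y\<^sup>2)) * iexp ((k*x)*y)))"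
  have FG: "F (Complex x y) = G x y" for x y
  proof -
    have "F (Complex x y) = complex_of_real (\<alpha>/pi) * exp (complex_of_real (-A*x\<^sup>2) + (complex_of_real (-B*y\<^sup>2) + \<i> * complex_of_real ((k*x)*y)))"
      unfolding F_def gauss_dens_def exp_cnj
      apply (simp add: exp_of_real[symmetric] mult_exp_exp mult.assoc[symmetric])
      apply (rule disjI2)
      apply (rule arg_cong[where f=exp])
      apply (simp only: cmodC)
      apply (simp add: complex_eq_iff A_def B_def k_def power2_eq_square algebra_simps)
      apply (simp add: field_simps)
      done
    also have "\<dots> = G x y"
      unfolding G_def by (simp add: exp_of_real[symmetric] mult_exp_exp algebra_simps)
    finally show ?thesis .
  qed
  define A' where "A' = A + k\<^sup>2/(4*B)"
  have A': "A' > 0" using A B by (simp add: A'_def add_pos_nonneg)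
  have Fm: "F \<in> borel_measurable borel"
    unfolding F_def gauss_dens_def by (intro borel_measurable_continuous_onI continuous_intros)
  have Gm: "(\<lambda>p. G (fst p) (snd p)) \<in> borel_measurable (lborel \<Otimes>\<^sub>M lborel)"
    unfolding G_def by measurable
  have innerG: "(\<integral>y. G x y \<partial>lborel) = complex_of_real (\<alpha>/pi * sqrt (pi/B) * exp (-A'*x\<^sup>2 + 0*x))" for x
  proof -
    have "(\<integral>y. G x y \<partial>lborel) = complex_of_real (\<alpha>/pi * exp (-A*x\<^sup>2)) * (\<integral>y. complex_of_real (exp (-B*y\<^sup>2)) * iexp ((k*x)*y) \<partial>lborel)"
      unfolding G_def by (rule integral_mult_right_zero)
    also have "\<dots> = complex_of_real (\<alpha>/pi * exp (-A*x\<^sup>2)) * complex_of_real (sqrt (pi/B) * exp (-(k*x)\<^sup>2/(4*B)))"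
      by (simp only: char_gauss[OF B])
    also have "\<dots> = complex_of_real (\<alpha>/pi * sqrt (pi/B) * (exp (-A*x\<^sup>2) * exp (-(k*x)\<^sup>2/(4*B))))"
      by (simp add: mult_ac)
    also have "exp (-A*x\<^sup>2) * exp (-(k*x)\<^sup>2/(4*B)) = exp (-A'*x\<^sup>2 + 0*x)"
      unfolding mult_exp_exp A'_def using B by (simp add: field_simps power_mult_distrib)
    finally show ?thesis .
  qed
  have normG: "(\<integral>y. norm (G x y) \<partial>lborel) = \<alpha>/pi * sqrt (pi/B) * exp (-A*x\<^sup>2 + 0*x)" for x
  proof -
    have "(\<integral>y. norm (G x y) \<partial>lborel) = (\<integral>y. (\<alpha>/pi * exp (-A*x\<^sup>2)) * exp (-B*y\<^sup>2 + 0*y) \<partial>lborel)"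
    proof (rule Bochner_Integration.integral_cong[OF refl])
      fix y
      show "norm (G x y) = (\<alpha>/pi * exp (-A*x\<^sup>2)) * exp (-B*y\<^sup>2 + 0*y)"
        unfolding G_def norm_mult norm_of_real norm_exp_i_times using \<alpha> by simp
    qed
    also have "\<dots> = (\<alpha>/pi * exp (-A*x\<^sup>2)) * (sqrt (pi/B) * exp (0\<^sup>2/(4*B)))"
      using gauss1_hbi[OF B, of 0] unfolding has_bochner_integral_iff by simp
    finally show ?thesis by simp
  qed
  have intpair: "integrable (lborel \<Otimes>\<^sub>M lborel) (\<lambda>p. F (Complex (fst p) (snd p)))"
  proof -
    have "integrable (lborel \<Otimes>\<^sub>M lborel) (\<lambda>p. G (fst p) (snd p))"
    proof (rule lborel_pair.Fubini_integrable[OF Gm])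
      have "integrable lborel (\<lambda>x. \<alpha>/pi * sqrt (pi/B) * exp (-A*x\<^sup>2 + 0*x))"
        using gauss1_hbi[OF A, of 0] unfolding has_bochner_integral_iff by simp
      then show "integrable lborel (\<lambda>x. \<integral>y. norm (G (fst (x, y)) (snd (x, y))) \<partial>lborel)"
        by (simp add: normG)
      show "AE x in lborel. integrable lborel (\<lambda>y. G (fst (x, y)) (snd (x, y)))"
        unfolding G_def fst_conv snd_conv
        by (intro AE_I2 integrable_mult_right char_gauss_integrable[OF B])
    qed
    then show ?thesis by (simp add: FG)
  qed
  have "ginner \<alpha> (\<lambda>z. exp (complex_of_real \<alpha> * 0 * z + complex_of_real (\<alpha>/2) * complex_of_real u * z\<^sup>2))
                  (\<lambda>z. exp (complex_of_real \<alpha> * 0 * z + complex_of_real (\<alpha>/2) * complex_of_real v * z\<^sup>2))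
      = (\<integral>z. F z \<partial>lborel)"
    unfolding ginner_def F_def ..
  also have "\<dots> = (\<integral>x. (\<integral>y. F (Complex x y) \<partial>lborel) \<partial>lborel)"
    by (rule integral_complex_pair[OF Fm intpair])
  also have "\<dots> = (\<integral>x. complex_of_real (\<alpha>/pi * sqrt (pi/B) * exp (-A'*x\<^sup>2 + 0*x)) \<partial>lborel)"
    by (simp add: FG innerG)
  also have "\<dots> = complex_of_real (\<alpha>/pi * sqrt (pi/B) * (sqrt (pi/A') * exp (0\<^sup>2/(4*A'))))"
    using gauss1_hbi[OF A', of 0] unfolding has_bochner_integral_iff integral_complex_of_real
    by (simp only: integral_mult_right_zero)
  also have "\<alpha>/pi * sqrt (pi/B) * (sqrt (pi/A') * exp (0\<^sup>2/(4*A'))) = 1 / sqrt (1 - u * v)"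
  proof -
    have "B * A' = A*B + B*(k\<^sup>2/(4*B))" unfolding A'_def by (simp add: algebra_simps)
    also have "B*(k\<^sup>2/(4*B)) = k\<^sup>2/4" using B by simp
    also have "A*B + k\<^sup>2/4 = \<alpha>\<^sup>2 * (1 - u * v)"
      unfolding A_def B_def k_def by (simp add: power2_eq_square field_simps)
    finally have BA: "B * A' = \<alpha>\<^sup>2 * (1 - u * v)" .
    have "u * v \<le> u" by (rule mult_left_le) (use u v in auto)
    then have uv: "1 - u * v > 0" using u by linarith
    have "sqrt (pi/B) * sqrt (pi/A') = pi / sqrt (B * A')"
      using A' B by (simp add: real_sqrt_mult[symmetric] real_sqrt_divide power2_eq_square)
    also have "sqrt (B * A') = \<alpha> * sqrt (1 - u * v)"
      unfolding BA using \<alpha> by (simp add: real_sqrt_mult)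
    finally have "sqrt (pi/B) * sqrt (pi/A') = pi / (\<alpha> * sqrt (1 - u * v))" .
    then show ?thesis using \<alpha> uv by (simp add: field_simps)
  qed
  finally show ?thesis .
qed

lemma gnorm_family:
  fixes \<alpha> q u :: real
  assumes \<alpha>: "\<alpha> > 0" and q: "q > 0" and u: "0 \<le> u" "u < 1"
  shows "gnorm q \<alpha> (\<lambda>z. exp (complex_of_real \<alpha> * 0 * z + complex_of_real (\<alpha>/2) * complex_of_real u * z\<^sup>2))
       = (1 - u\<^sup>2) powr (-1/(2*q))"
proof -
  have c: "cmod (complex_of_real u) < 1" using u by simp
  show ?thesis using gnorm_gauss[OF \<alpha> q c, of 0] u by (simp add: Phi_def)
qed

lemma Rratio_family:
  fixes \<alpha> p u v :: real
  assumes \<alpha>: "\<alpha> > 0" and p: "p > 1" and u: "0 \<le> u" "u < 1" and v: "0 \<le> v" "v < 1"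
  shows "Rratio p \<alpha> (\<lambda>z. exp (complex_of_real \<alpha> * 0 * z + complex_of_real (\<alpha>/2) * complex_of_real u * z\<^sup>2))
                    (\<lambda>z. exp (complex_of_real \<alpha> * 0 * z + complex_of_real (\<alpha>/2) * complex_of_real v * z\<^sup>2))
       = (1 - u\<^sup>2) powr (1/(2*p)) * (1 - v\<^sup>2) powr (1/(2*conj_exp p)) / sqrt (1 - u * v)"
proof -
  have q: "conj_exp p > 0" using conj_exp_props(1)[OF p] by simp
  have X: "1 - u\<^sup>2 > 0" using u by (simp add: abs_square_less_1)
  have Y: "1 - v\<^sup>2 > 0" using v by (simp add: abs_square_less_1)
  have "u * v \<le> u" by (rule mult_left_le) (use u v in auto)
  then have uv: "1 - u * v > 0" using u by linarith
  have p0: "p > 0" using p by simp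
  have cm: "cmod (complex_of_real (1 / sqrt (1 - u * v))) = 1 / sqrt (1 - u * v)"
    using uv by (simp only: norm_of_real) simp
  show ?thesis
    unfolding Rratio_def inner_family[OF \<alpha> u v] gnorm_family[OF \<alpha> p0 u] gnorm_family[OF \<alpha> q v]
      powr_neg_inv cm
    using p X Y uv by (simp add: field_simps)
qed

lemma family_value:
  fixes p t :: real
  assumes p: "p > 1" and t: "0 < t" "t \<le> 1"
  defines "q \<equiv> conj_exp p"
  shows "(1 - (1 - t/p)\<^sup>2) powr (1/(2*p)) * (1 - (1 - t/q)\<^sup>2) powr (1/(2*q)) / sqrt (1 - (1 - t/p) * (1 - t/q))
       = (1/p * (2 - t/p)) powr (1/(2*p)) * (1/q * (2 - t/q)) powr (1/(2*q)) / sqrt (1 - t/(p*q))"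
proof -
  have q: "q > 1" and pq: "1/p + 1/q = 1" using conj_exp_props[OF p] by (auto simp: q_def)
  define P where "P = 1/p * (2 - t/p)"
  define Q where "Q = 1/q * (2 - t/q)"
  define W where "W = 1 - t/(p*q)"
  have tp: "t/p < 1" using p t by (simp add: divide_less_eq)
  have tq: "t/q < 1" using q t by (simp add: divide_less_eq)
  have "2 - t/p > 0" using tp by linarith
  then have P: "P > 0" using p unfolding P_def by (intro mult_pos_pos) auto
  have "2 - t/q > 0" using tq by linarith
  then have Q: "Q > 0" using q unfolding Q_def by (intro mult_pos_pos) auto
  have "t/(p*q) < 1" using tp q t p by (simp add: divide_less_eq) (smt (verit) mult_less_cancel_left1 mult_pos_pos)
  then have W: "W > 0" by (simp add: W_def)
  have e1: "1 - (1 - t/p)\<^sup>2 = t * P" unfolding P_def using p by (simp add: power2_eq_square field_simps)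
  have e2: "1 - (1 - t/q)\<^sup>2 = t * Q" unfolding Q_def using q by (simp add: power2_eq_square field_simps)
  have e3: "1 - (1 - t/p) * (1 - t/q) = t * W"
  proof -
    have "1 - (1 - t/p) * (1 - t/q) = t * (1/p + 1/q) - t\<^sup>2/(p*q)"
      using p q by (simp add: power2_eq_square field_simps)
    also have "\<dots> = t * W" unfolding pq W_def by (simp add: power2_eq_square field_simps)
    finally show ?thesis .
  qed
  have tt: "t powr (1/(2*p)) * t powr (1/(2*q)) = sqrt t"
  proof -
    have ex: "1/(2*p) + 1/(2*q) = (1/p + 1/q)/2" using p q by (simp add: field_simps)
    have "t powr (1/(2*p)) * t powr (1/(2*q)) = t powr ((1/p + 1/q)/2)"
      unfolding powr_add[symmetric] ex ..
    also have "\<dots> = sqrt t" unfolding pq using t by (simp add: powr_half_sqrt)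
    finally show ?thesis .
  qed
  have "(1 - (1 - t/p)\<^sup>2) powr (1/(2*p)) * (1 - (1 - t/q)\<^sup>2) powr (1/(2*q)) / sqrt (1 - (1 - t/p) * (1 - t/q))
     = (t powr (1/(2*p)) * t powr (1/(2*q))) * (P powr (1/(2*p)) * Q powr (1/(2*q))) / (sqrt t * sqrt W)"
    unfolding e1 e2 e3 using t P Q W by (simp add: powr_mult real_sqrt_mult mult_ac)
  also have "\<dots> = P powr (1/(2*p)) * Q powr (1/(2*q)) / sqrt W"
    unfolding tt using t by simp
  finally show ?thesis unfolding P_def Q_def W_def .
qed

lemma limit_value:
  fixes p :: real
  assumes p: "p > 1"
  defines "q \<equiv> conj_exp p"
  shows "(1/p * (2 - 0/p)) powr (1/(2*p)) * (1/q * (2 - 0/q)) powr (1/(2*q)) / sqrt (1 - 0/(p*q)) = sqrt (Cp p)"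
proof -
  have q: "q > 1" and pq: "1/p + 1/q = 1" using conj_exp_props[OF p] by (auto simp: q_def)
  define L where "L = (2/p) powr (1/(2*p)) * (2/q) powr (1/(2*q))"
  have L0: "L \<ge> 0" unfolding L_def by simp
  have "L\<^sup>2 = ((2/p) powr (1/(2*p)))\<^sup>2 * ((2/q) powr (1/(2*q)))\<^sup>2"
    unfolding L_def by (simp add: power_mult_distrib)
  also have "((2/p) powr (1/(2*p)))\<^sup>2 = (2/p) powr (1/p)"
    using p by (simp add: powr_powr[symmetric] powr_realpow[symmetric] power2_eq_square powr_add[symmetric])
  also have "((2/q) powr (1/(2*q)))\<^sup>2 = (2/q) powr (1/q)"
    using q by (simp add: powr_powr[symmetric] powr_realpow[symmetric] power2_eq_square powr_add[symmetric])
  also have "(2/p) powr (1/p) * (2/q) powr (1/q) = (2 powr (1/p) * 2 powr (1/q)) * (1 / p powr (1/p)) * (1 / q powr (1/q))"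
    using p q by (simp add: powr_divide)
  also have "2 powr (1/p) * 2 powr (1/q) = (2::real)"
    by (simp add: powr_add[symmetric] pq)
  also have "1 / p powr (1/p) = p powr (-1/p)"
    by (simp add: minus_divide_left[symmetric] powr_minus_divide)
  also have "1 / q powr (1/q) = q powr (-1/q)"
    by (simp add: minus_divide_left[symmetric] powr_minus_divide)
  finally have "L\<^sup>2 = Cp p" unfolding Cp_def q_def by simp
  then have "L = sqrt (Cp p)" using L0 by (simp add: real_sqrt_unique)
  then show ?thesis unfolding L_def by simp
qed

theorem theorem5p2:
  fixes \<alpha> p :: real
  assumes "\<alpha> > 0" and "1 < p"
  shows "(SUP gh \<in> gaussians \<alpha> \<times> gaussians \<alpha>. ereal (Rratio p \<alpha> (fst gh) (snd gh)))
           = ereal (sqrt (Cp p))"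
proof (rule antisym)
  have \<alpha>: "\<alpha> > 0" and p: "p > 1" using assms by auto
  define q where "q = conj_exp p"
  have q: "q > 1" using conj_exp_props[OF p] by (simp add: q_def)
  show "(SUP gh \<in> gaussians \<alpha> \<times> gaussians \<alpha>. ereal (Rratio p \<alpha> (fst gh) (snd gh))) \<le> ereal (sqrt (Cp p))"
  proof (rule SUP_least)
    fix gh assume "gh \<in> gaussians \<alpha> \<times> gaussians \<alpha>"
    then obtain a c b d where c: "cmod c < 1" and d: "cmod d < 1"
      and gh: "fst gh = (\<lambda>z. exp (complex_of_real \<alpha> * a * z + complex_of_real (\<alpha>/2) * c * z\<^sup>2))"
              "snd gh = (\<lambda>z. exp (complex_of_real \<alpha> * b * z + complex_of_real (\<alpha>/2) * d * z\<^sup>2))"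
      unfolding gaussians_def by (auto simp: mem_Times_iff)
    show "ereal (Rratio p \<alpha> (fst gh) (snd gh)) \<le> ereal (sqrt (Cp p))"
      unfolding gh using upper_bound[OF \<alpha> p c d] by simp
  qed
  define t :: "nat \<Rightarrow> real" where "t = (\<lambda>n. inverse (real (Suc n)))"
  have t0: "t n > 0" "t n \<le> 1" for n by (auto simp: t_def field_simps)
  define fam :: "real \<Rightarrow> complex \<Rightarrow> complex" where
    "fam = (\<lambda>u z. exp (complex_of_real \<alpha> * 0 * z + complex_of_real (\<alpha>/2) * complex_of_real u * z\<^sup>2))"
  define L :: "real \<Rightarrow> real" where
    "L = (\<lambda>s. (1/p * (2 - s/p)) powr (1/(2*p)) * (1/q * (2 - s/q)) powr (1/(2*q)) / sqrt (1 - s/(p*q)))"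
  have uv: "0 \<le> 1 - t n / r" "1 - t n / r < 1" if "r > 1" for n r
  proof -
    have "t n / r < 1" using t0[of n] that by (simp add: divide_less_eq)
    then show "0 \<le> 1 - t n / r" by simp
    show "1 - t n / r < 1" using t0[of n] that by simp
  qed
  have mem: "fam u \<in> gaussians \<alpha>" if "0 \<le> u" "u < 1" for u
    unfolding gaussians_def fam_def using that
    by (intro CollectI exI[of _ 0] exI[of _ "complex_of_real u"]) simp
  have val: "Rratio p \<alpha> (fam (1 - t n / p)) (fam (1 - t n / q)) = L (t n)" for n
    unfolding fam_def L_def q_def
    using Rratio_family[OF \<alpha> p uv[OF p] uv[OF q[unfolded q_def]]] family_value[OF p t0]
    by simp
  have lim: "(\<lambda>n. L (t n)) \<longlonglongrightarrow> L 0"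
  proof -
    have tl: "t \<longlonglongrightarrow> 0" unfolding t_def by (rule LIMSEQ_inverse_real_of_nat)
    show ?thesis unfolding L_def using p q
      by (intro tendsto_intros tl) auto
  qed
  have L0: "L 0 = sqrt (Cp p)" unfolding L_def q_def by (rule limit_value[OF p])
  show "ereal (sqrt (Cp p)) \<le> (SUP gh \<in> gaussians \<alpha> \<times> gaussians \<alpha>. ereal (Rratio p \<alpha> (fst gh) (snd gh)))"
  proof (rule Lim_bounded[where M=0])
    show "(\<lambda>n. ereal (L (t n))) \<longlonglongrightarrow> ereal (sqrt (Cp p))"
      using lim unfolding L0 by (rule tendsto_ereal)
    show "\<forall>n\<ge>0. ereal (L (t n)) \<le> (SUP gh \<in> gaussians \<alpha> \<times> gaussians \<alpha>. ereal (Rratio p \<alpha> (fst gh) (snd gh)))"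
    proof (intro allI impI)
      fix n :: nat
      have "(fam (1 - t n / p), fam (1 - t n / q)) \<in> gaussians \<alpha> \<times> gaussians \<alpha>"
        using mem[OF uv[OF p]] mem[OF uv[OF q]] by simp
      then have "ereal (Rratio p \<alpha> (fst (fam (1 - t n / p), fam (1 - t n / q))) (snd (fam (1 - t n / p), fam (1 - t n / q))))
          \<le> (SUP gh \<in> gaussians \<alpha> \<times> gaussians \<alpha>. ereal (Rratio p \<alpha> (fst gh) (snd gh)))"
        by (rule SUP_upper)
      then show "ereal (L (t n)) \<le> (SUP gh \<in> gaussians \<alpha> \<times> gaussians \<alpha>. ereal (Rratio p \<alpha> (fst gh) (snd gh)))"
        using val[of n] by simp
    qed
  qed
qed

end
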